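(* Let $(V,L,\varphi,E)$ and $(V,C,\psi,E)$ be valuation systems. Assume that $\psi$ extends $\varphi$ and that $(V,C,\psi,E)$ is complete. Then $\varphi$ is extendible and $\psi$ extends $\overline\varphi$.
   Context: A valuation system $(V,L,\varphi,E)$ consists of: (i) a lattice $V$ which is $\sigma$-distributive (for every $a\in V$ and sequence $(b_n)$ with existing infimum, $\bigwedge_n(a\vee b_n)$ exists and equals $a\vee\bigwedge_n b_n$, and dually for suprema); (ii) a sublattice $L$ of $V$; (iii) a partially ordered abelian group $E$ which is R-complete (whenever $x_1\ge x_2\ge\cdots$ and $y_1\ge y_2\ge\cdots$ in $E$ are such that $\bigwedge_n(x_n+y_n)$ exists, $\bigwedge_n x_n$ and $\bigwedge_n y_n$ exist; dually for increasing sequences); (iv) a valuation $\varphi:L\to E$ (order-preserving, $\varphi(a\wedge b)+\varphi(a\vee b)=\varphi(a)+\varphi(b)$). A map $\psi:C\to E$ extends $\varphi:L\to E$ if $L\subseteq C$ and $\psi|_L=\varphi$. A decreasing (resp. increasing) sequence $(a_n)$ in $L$ is $\varphi$-convergent if $\bigwedge_n a_n$ exists in $V$ and $\bigwedge_n\varphi(a_n)$ exists in $E$ (resp. with suprema). The system is $\Pi$-complete if for every $\varphi$-convergent decreasing $(a_n)$ in $L$, $\bigwedge_n a_n\in L$ and $\varphi(\bigwedge_n a_n)=\bigwedge_n\varphi(a_n)$; $\Sigma$-complete dually; complete if both. $\Pi L:=\{\bigwedge_n a_n:(a_n)\ \varphi\text{-convergent decreasing}\}$ and $\varphi$ is $\Pi$-extendible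 if there is a valuation $\Pi\varphi:\Pi L\to E$ with $\Pi\varphi(\bigwedge_n a_n)=\bigwedge_n\varphi(a_n)$; $\Sigma L,\Sigma\varphi$ dually. Hierarchy (transfinite recursion): $\Pi_0\varphi=\Sigma_0\varphi=\varphi$; $\varphi$ is $\Pi_{\alpha+1}$-extendible iff it is $\Sigma_\alpha$-extendible and $\Sigma_\alpha\varphi$ is $\Pi$-extendible, with $\Pi_{\alpha+1}\varphi=\Pi(\Sigma_\alpha\varphi)$; $\varphi$ is $\Sigma_{\alpha+1}$-extendible iff it is $\Pi_\alpha$-extendible and $\Pi_\alpha\varphi$ is $\Sigma$-extendible, with $\Sigma_{\alpha+1}\varphi=\Sigma(\Pi_\alpha\varphi)$; at a limit $\lambda$, $\varphi$ is $\Pi_\lambda$-extendible iff $\Pi_\alpha$-extendible for all $\alpha<\lambda$, and then $\Pi_\lambda\varphi$ is the common extension of the $\Pi_\alpha\varphi$ on $\bigcup_{\alpha<\lambda}\Pi_\alpha L$; similarly $\Sigma_\lambda$. The hierarchy has collapsed at $Q$, where $Q=\Pi_\alpha\varphi$ or $Q=\Sigma_\alpha\varphi$, if $\varphi$ is $\Pi_{\alpha+1}$- and $\Sigma_{\alpha+1}$-extendible and $\Pi(Q)=Q=\Sigma(Q)$. $\varphi$ is extendible if the hierarchy has collapsed at some $Q$; this $Q$ is then unique and denoted $\overline\varphi$. *)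

theory Defs
  imports Complex_Main
begin

definition is_glb :: "'a::order set \<Rightarrow> 'a \<Rightarrow> bool" where
  "is_glb A x \<longleftrightarrow> (\<forall>y\<in>A. x \<le> y) \<and> (\<forall>z. (\<forall>y\<in>A. z \<le> y) \<longrightarrow> z \<le> x)"

definition is_lub :: "'a::order set \<Rightarrow> 'a \<Rightarrow> bool" where
  "is_lub A x \<longleftrightarrow> (\<forall>y\<in>A. y \<le> x) \<and> (\<forall>z. (\<forall>y\<in>A. y \<le> z) \<longrightarrow> x \<le> z)"

definition has_inf :: "(nat \<Rightarrow> 'a::order) \<Rightarrow> bool" where
  "has_inf a \<longleftrightarrow> (\<exists>x. is_glb (range a) x)"

definition has_sup :: "(nat \<Rightarrow> 'a::order) \<Rightarrow> bool" where
  "has_sup a \<longleftrightarrow> (\<exists>x. is_lub (range a) x)"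

definition inf_seq :: "(nat \<Rightarrow> 'a::order) \<Rightarrow> 'a" where
  "inf_seq a = (THE x. is_glb (range a) x)"

definition sup_seq :: "(nat \<Rightarrow> 'a::order) \<Rightarrow> 'a" where
  "sup_seq a = (THE x. is_lub (range a) x)"

text \<open>The lattice V is the whole type 'a (class lattice); E is the type 'e
  (class ordered_ab_group_add).\<close>

definition sigma_distributive :: "'a::lattice itself \<Rightarrow> bool" where
  "sigma_distributive (T::'a itself) \<longleftrightarrow>
     (\<forall>(a::'a) (b::nat \<Rightarrow> 'a) x. is_glb (range b) x \<longrightarrow> is_glb (range (\<lambda>n. sup a (b n))) (sup a x)) \<and>
     (\<forall>(a::'a) (b::nat \<Rightarrow> 'a) x. is_lub (range b) x \<longrightarrow> is_lub (range (\<lambda>n. inf a (b n))) (inf a x))"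

definition R_complete :: "'e::ordered_ab_group_add itself \<Rightarrow> bool" where
  "R_complete (T::'e itself) \<longleftrightarrow>
     (\<forall>(x::nat \<Rightarrow> 'e) y. decseq x \<and> decseq y \<and> has_inf (\<lambda>n. x n + y n)
         \<longrightarrow> has_inf x \<and> has_inf y) \<and>
     (\<forall>(x::nat \<Rightarrow> 'e) y. incseq x \<and> incseq y \<and> has_sup (\<lambda>n. x n + y n)
         \<longrightarrow> has_sup x \<and> has_sup y)"

definition sublattice :: "'a::lattice set \<Rightarrow> bool" where
  "sublattice L \<longleftrightarrow> (\<forall>a\<in>L. \<forall>b\<in>L. inf a b \<in> L \<and> sup a b \<in> L)"

definition valuation :: "'a::lattice set \<Rightarrow> ('a \<Rightarrow> 'e::ordered_ab_group_add) \<Rightarrow> bool" where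
  "valuation L \<phi> \<longleftrightarrow>
     (\<forall>a\<in>L. \<forall>b\<in>L. a \<le> b \<longrightarrow> \<phi> a \<le> \<phi> b) \<and>
     (\<forall>a\<in>L. \<forall>b\<in>L. \<phi> (inf a b) + \<phi> (sup a b) = \<phi> a + \<phi> b)"

definition valuation_system ::
  "'a::lattice set \<Rightarrow> ('a \<Rightarrow> 'e::ordered_ab_group_add) \<Rightarrow> bool" where
  "valuation_system L \<phi> \<longleftrightarrow>
     sigma_distributive TYPE('a) \<and> R_complete TYPE('e) \<and> sublattice L \<and> valuation L \<phi>"

definition extends :: "'a set \<Rightarrow> ('a \<Rightarrow> 'e) \<Rightarrow> 'a set \<Rightarrow> ('a \<Rightarrow> 'e) \<Rightarrow> bool" where
  "extends C \<psi> L \<phi> \<longleftrightarrow> L \<subseteq> C \<and> (\<forall>x\<in>L. \<psi> x = \<phi> x)"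

definition conv_dec :: "'a::lattice set \<Rightarrow> ('a \<Rightarrow> 'e::ordered_ab_group_add) \<Rightarrow> (nat \<Rightarrow> 'a) \<Rightarrow> bool" where
  "conv_dec L \<phi> a \<longleftrightarrow> (\<forall>n. a n \<in> L) \<and> decseq a \<and> has_inf a \<and> has_inf (\<lambda>n. \<phi> (a n))"

definition conv_inc :: "'a::lattice set \<Rightarrow> ('a \<Rightarrow> 'e::ordered_ab_group_add) \<Rightarrow> (nat \<Rightarrow> 'a) \<Rightarrow> bool" where
  "conv_inc L \<phi> a \<longleftrightarrow> (\<forall>n. a n \<in> L) \<and> incseq a \<and> has_sup a \<and> has_sup (\<lambda>n. \<phi> (a n))"

definition Pi_complete :: "'a::lattice set \<Rightarrow> ('a \<Rightarrow> 'e::ordered_ab_group_add) \<Rightarrow> bool" where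
  "Pi_complete L \<phi> \<longleftrightarrow>
     (\<forall>a. conv_dec L \<phi> a \<longrightarrow> inf_seq a \<in> L \<and> \<phi> (inf_seq a) = inf_seq (\<lambda>n. \<phi> (a n)))"

definition Sigma_complete :: "'a::lattice set \<Rightarrow> ('a \<Rightarrow> 'e::ordered_ab_group_add) \<Rightarrow> bool" where
  "Sigma_complete L \<phi> \<longleftrightarrow>
     (\<forall>a. conv_inc L \<phi> a \<longrightarrow> sup_seq a \<in> L \<and> \<phi> (sup_seq a) = sup_seq (\<lambda>n. \<phi> (a n)))"

definition complete_vs :: "'a::lattice set \<Rightarrow> ('a \<Rightarrow> 'e::ordered_ab_group_add) \<Rightarrow> bool" where
  "complete_vs L \<phi> \<longleftrightarrow> Pi_complete L \<phi> \<and> Sigma_complete L \<phi>"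

text \<open>Partial maps into E are represented as pairs (domain, function); the
  function is irrelevant outside the domain.\<close>
type_synonym ('a, 'e) pmap = "'a set \<times> ('a \<Rightarrow> 'e)"

definition pm_eq :: "('a, 'e) pmap \<Rightarrow> ('a, 'e) pmap \<Rightarrow> bool" where
  "pm_eq P Q \<longleftrightarrow> fst P = fst Q \<and> (\<forall>x\<in>fst P. snd P x = snd Q x)"

definition Pi_dom :: "('a::lattice, 'e::ordered_ab_group_add) pmap \<Rightarrow> 'a set" where
  "Pi_dom P = {inf_seq a | a. conv_dec (fst P) (snd P) a}"

definition Sigma_dom :: "('a::lattice, 'e::ordered_ab_group_add) pmap \<Rightarrow> 'a set" where
  "Sigma_dom P = {sup_seq a | a. conv_inc (fst P) (snd P) a}"

definition Pi_fun :: "('a::lattice, 'e::ordered_ab_group_add) pmap \<Rightarrow> 'a \<Rightarrow> 'e" where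
  "Pi_fun P x = (SOME e. \<exists>a. conv_dec (fst P) (snd P) a \<and> inf_seq a = x \<and> inf_seq (\<lambda>n. snd P (a n)) = e)"

definition Sigma_fun :: "('a::lattice, 'e::ordered_ab_group_add) pmap \<Rightarrow> 'a \<Rightarrow> 'e" where
  "Sigma_fun P x = (SOME e. \<exists>a. conv_inc (fst P) (snd P) a \<and> sup_seq a = x \<and> sup_seq (\<lambda>n. snd P (a n)) = e)"

text \<open>\<Pi>-extendible: there is a valuation \<Pi>\<phi> on \<Pi>L with \<Pi>\<phi>(\<And>a_n) = \<And>\<phi>(a_n).
  Such a map is necessarily Pi_fun, so this is the definition unfolded.\<close>
definition Pi_extendible :: "('a::lattice, 'e::ordered_ab_group_add) pmap \<Rightarrow> bool" where
  "Pi_extendible P \<longleftrightarrow>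
     (\<exists>\<chi>. valuation (Pi_dom P) \<chi> \<and>
        (\<forall>a. conv_dec (fst P) (snd P) a \<longrightarrow> \<chi> (inf_seq a) = inf_seq (\<lambda>n. snd P (a n))))"

definition Sigma_extendible :: "('a::lattice, 'e::ordered_ab_group_add) pmap \<Rightarrow> bool" where
  "Sigma_extendible P \<longleftrightarrow>
     (\<exists>\<chi>. valuation (Sigma_dom P) \<chi> \<and>
        (\<forall>a. conv_inc (fst P) (snd P) a \<longrightarrow> \<chi> (sup_seq a) = sup_seq (\<lambda>n. snd P (a n))))"

definition Pi_ext :: "('a::lattice, 'e::ordered_ab_group_add) pmap \<Rightarrow> ('a, 'e) pmap" where
  "Pi_ext P = (Pi_dom P, Pi_fun P)"

definition Sigma_ext :: "('a::lattice, 'e::ordered_ab_group_add) pmap \<Rightarrow> ('a, 'e) pmap" where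
  "Sigma_ext P = (Sigma_dom P, Sigma_fun P)"

text \<open>Ordinals are represented by elements of the field of a well-order r.
  A stage map H assigns to each index \<beta> and each flag (True = \<Pi>, False = \<Sigma>)
  the partial map \<Pi>_\<beta>\<phi> resp. \<Sigma>_\<beta>\<phi>.\<close>

definition wo_zero :: "('i \<times> 'i) set \<Rightarrow> 'i \<Rightarrow> bool" where
  "wo_zero r \<beta> \<longleftrightarrow> \<beta> \<in> Field r \<and> (\<forall>\<delta>\<in>Field r. (\<beta>, \<delta>) \<in> r)"

definition wo_succ_of :: "('i \<times> 'i) set \<Rightarrow> 'i \<Rightarrow> 'i \<Rightarrow> bool" where
  "wo_succ_of r \<gamma> \<beta> \<longleftrightarrow> (\<gamma>, \<beta>) \<in> r \<and> \<gamma> \<noteq> \<beta> \<and>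
     (\<forall>\<delta>. (\<gamma>, \<delta>) \<in> r \<and> (\<delta>, \<beta>) \<in> r \<longrightarrow> \<delta> = \<gamma> \<or> \<delta> = \<beta>)"

definition wo_limit :: "('i \<times> 'i) set \<Rightarrow> 'i \<Rightarrow> bool" where
  "wo_limit r \<beta> \<longleftrightarrow> \<beta> \<in> Field r \<and> \<not> wo_zero r \<beta> \<and> \<not> (\<exists>\<gamma>. wo_succ_of r \<gamma> \<beta>)"

text \<open>hierarchy r L \<phi> H \<theta>: H realises the hierarchy at all stages \<beta> \<le> \<theta>,
  i.e. \<phi> is \<Pi>_\<beta>- and \<Sigma>_\<beta>-extendible for all \<beta> \<le> \<theta> with
  \<Pi>_\<beta>\<phi> = H \<beta> True and \<Sigma>_\<beta>\<phi> = H \<beta> False.\<close>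
definition hierarchy ::
  "('i \<times> 'i) set \<Rightarrow> 'a::lattice set \<Rightarrow> ('a \<Rightarrow> 'e::ordered_ab_group_add)
   \<Rightarrow> ('i \<Rightarrow> bool \<Rightarrow> ('a, 'e) pmap) \<Rightarrow> 'i \<Rightarrow> bool" where
  "hierarchy r L \<phi> H \<theta> \<longleftrightarrow>
    (\<forall>\<beta>. (\<beta>, \<theta>) \<in> r \<longrightarrow>
      (wo_zero r \<beta> \<longrightarrow> pm_eq (H \<beta> True) (L, \<phi>) \<and> pm_eq (H \<beta> False) (L, \<phi>)) \<and>
      (\<forall>\<gamma>. wo_succ_of r \<gamma> \<beta> \<longrightarrow>
          Pi_extendible (H \<gamma> False) \<and> pm_eq (H \<beta> True) (Pi_ext (H \<gamma> False)) \<and>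
          Sigma_extendible (H \<gamma> True) \<and> pm_eq (H \<beta> False) (Sigma_ext (H \<gamma> True))) \<and>
      (wo_limit r \<beta> \<longrightarrow>
          (\<forall>k. fst (H \<beta> k) = (\<Union>\<gamma>\<in>{\<gamma>. (\<gamma>, \<beta>) \<in> r \<and> \<gamma> \<noteq> \<beta>}. fst (H \<gamma> k)) \<and>
               (\<forall>\<gamma>. (\<gamma>, \<beta>) \<in> r \<and> \<gamma> \<noteq> \<beta> \<longrightarrow>
                    (\<forall>x\<in>fst (H \<gamma> k). snd (H \<beta> k) x = snd (H \<gamma> k) x)))))"

text \<open>Ordinal indices
  range over well-orders on the type 'a set set.\<close>
definition collapsed_at ::
  "'a::lattice set \<Rightarrow> ('a \<Rightarrow> 'e::ordered_ab_group_add) \<Rightarrow> ('a, 'e) pmap \<Rightarrow> bool" where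
  "collapsed_at L \<phi> Q \<longleftrightarrow>
    (\<exists>(r :: ('a set set \<times> 'a set set) set) \<alpha> \<beta> H k.
        Well_order r \<and> wo_succ_of r \<alpha> \<beta> \<and> hierarchy r L \<phi> H \<beta> \<and> Q = H \<alpha> k \<and>
        Pi_extendible Q \<and> pm_eq (Pi_ext Q) Q \<and>
        Sigma_extendible Q \<and> pm_eq (Sigma_ext Q) Q)"

definition extendible :: "'a::lattice set \<Rightarrow> ('a \<Rightarrow> 'e::ordered_ab_group_add) \<Rightarrow> bool" where
  "extendible L \<phi> \<longleftrightarrow> (\<exists>Q. collapsed_at L \<phi> Q)"

definition phibar :: "'a::lattice set \<Rightarrow> ('a \<Rightarrow> 'e::ordered_ab_group_add) \<Rightarrow> ('a, 'e) pmap" where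
  "phibar L \<phi> = (SOME Q. collapsed_at L \<phi> Q)"

end

theory Submission
  imports Defs
begin

unbundle cardinal_syntax


lemma glb_unique: "is_glb A x \<Longrightarrow> is_glb A y \<Longrightarrow> x = (y::'a::order)"
  unfolding is_glb_def by (meson order_antisym)
lemma lub_unique: "is_lub A x \<Longrightarrow> is_lub A y \<Longrightarrow> x = (y::'a::order)"
  unfolding is_lub_def by (meson order_antisym)

lemma inf_seq_eq: "is_glb (range a) x \<Longrightarrow> inf_seq a = x"
  unfolding inf_seq_def using glb_unique by blast
lemma sup_seq_eq: "is_lub (range a) x \<Longrightarrow> sup_seq a = x"
  unfolding sup_seq_def using lub_unique by blast

lemma conv_dec_const: "x \<in> X \<Longrightarrow> conv_dec X f (\<lambda>n. x) \<and> inf_seq (\<lambda>n. x) = x"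
proof -
  assume "x \<in> X"
  have g: "is_glb (range (\<lambda>n. x)) x" by (simp add: is_glb_def)
  have g2: "is_glb (range (\<lambda>n. f x)) (f x)" by (simp add: is_glb_def)
  show ?thesis using \<open>x \<in> X\<close> g g2 inf_seq_eq[OF g]
    unfolding conv_dec_def has_inf_def decseq_def by auto
qed
lemma conv_inc_const: "x \<in> X \<Longrightarrow> conv_inc X f (\<lambda>n. x) \<and> sup_seq (\<lambda>n. x) = x"
proof -
  assume "x \<in> X"
  have g: "is_lub (range (\<lambda>n. x)) x" by (simp add: is_lub_def)
  have g2: "is_lub (range (\<lambda>n. f x)) (f x)" by (simp add: is_lub_def)
  show ?thesis using \<open>x \<in> X\<close> g g2 sup_seq_eq[OF g]
    unfolding conv_inc_def has_sup_def incseq_def by auto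
qed

lemma conv_dec_mono: "conv_dec X f a \<Longrightarrow> X \<subseteq> Y \<Longrightarrow> conv_dec Y f a"
  unfolding conv_dec_def by auto
lemma conv_inc_mono: "conv_inc X f a \<Longrightarrow> X \<subseteq> Y \<Longrightarrow> conv_inc Y f a"
  unfolding conv_inc_def by auto

definition good :: "'a set \<Rightarrow> ('a \<Rightarrow> 'e) \<Rightarrow> ('a, 'e) pmap \<Rightarrow> bool" where
  "good C \<psi> P \<longleftrightarrow> fst P \<subseteq> C \<and> (\<forall>x\<in>fst P. snd P x = \<psi> x)"

lemma conv_dec_good: "good C \<psi> P \<Longrightarrow> conv_dec (fst P) (snd P) a \<longleftrightarrow> conv_dec (fst P) \<psi> a"
proof -
  assume g: "good C \<psi> P"
  have "(\<forall>n. a n \<in> fst P) \<Longrightarrow> (\<lambda>n. snd P (a n)) = (\<lambda>n. \<psi> (a n))"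
    using g unfolding good_def by auto
  thus ?thesis unfolding conv_dec_def by auto
qed
lemma conv_inc_good: "good C \<psi> P \<Longrightarrow> conv_inc (fst P) (snd P) a \<longleftrightarrow> conv_inc (fst P) \<psi> a"
proof -
  assume g: "good C \<psi> P"
  have "(\<forall>n. a n \<in> fst P) \<Longrightarrow> (\<lambda>n. snd P (a n)) = (\<lambda>n. \<psi> (a n))"
    using g unfolding good_def by auto
  thus ?thesis unfolding conv_inc_def by auto
qed

lemma conv_dec_val: "good C \<psi> P \<Longrightarrow> conv_dec (fst P) (snd P) a \<Longrightarrow>
   inf_seq (\<lambda>n. snd P (a n)) = inf_seq (\<lambda>n. \<psi> (a n))"
proof -
  assume g: "good C \<psi> P" and c: "conv_dec (fst P) (snd P) a"
  have "(\<lambda>n. snd P (a n)) = (\<lambda>n. \<psi> (a n))"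
    using g c unfolding good_def conv_dec_def by auto
  thus ?thesis by simp
qed
lemma conv_inc_val: "good C \<psi> P \<Longrightarrow> conv_inc (fst P) (snd P) a \<Longrightarrow>
   sup_seq (\<lambda>n. snd P (a n)) = sup_seq (\<lambda>n. \<psi> (a n))"
proof -
  assume g: "good C \<psi> P" and c: "conv_inc (fst P) (snd P) a"
  have "(\<lambda>n. snd P (a n)) = (\<lambda>n. \<psi> (a n))"
    using g c unfolding good_def conv_inc_def by auto
  thus ?thesis by simp
qed

lemma Pi_good:
  assumes cpl: "complete_vs C \<psi>" and g: "good C \<psi> P"
  shows "Pi_dom P \<subseteq> C \<and> (\<forall>x\<in>Pi_dom P. Pi_fun P x = \<psi> x)"
    and "\<And>a. conv_dec (fst P) (snd P) a \<Longrightarrow> \<psi> (inf_seq a) = inf_seq (\<lambda>n. snd P (a n))"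
proof -
  have key: "inf_seq a \<in> C \<and> \<psi> (inf_seq a) = inf_seq (\<lambda>n. snd P (a n))"
    if c: "conv_dec (fst P) (snd P) a" for a
  proof -
    have "conv_dec C \<psi> a" using conv_dec_mono[of "fst P" \<psi> a C] c g conv_dec_good[OF g]
      unfolding good_def by auto
    hence "inf_seq a \<in> C \<and> \<psi> (inf_seq a) = inf_seq (\<lambda>n. \<psi> (a n))"
      using cpl unfolding complete_vs_def Pi_complete_def by blast
    thus ?thesis using conv_dec_val[OF g c] by simp
  qed
  show "\<And>a. conv_dec (fst P) (snd P) a \<Longrightarrow> \<psi> (inf_seq a) = inf_seq (\<lambda>n. snd P (a n))"
    using key by blast
  show "Pi_dom P \<subseteq> C \<and> (\<forall>x\<in>Pi_dom P. Pi_fun P x = \<psi> x)"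
  proof (intro conjI ballI subsetI)
    fix x assume "x \<in> Pi_dom P"
    then obtain a where a: "conv_dec (fst P) (snd P) a" "x = inf_seq a" unfolding Pi_dom_def by blast
    thus "x \<in> C" using key by blast
    show "Pi_fun P x = \<psi> x" unfolding Pi_fun_def
      apply (rule someI2_ex)
      using a apply blast
      using key a by metis
  qed
qed

lemma Sigma_good:
  assumes cpl: "complete_vs C \<psi>" and g: "good C \<psi> P"
  shows "Sigma_dom P \<subseteq> C \<and> (\<forall>x\<in>Sigma_dom P. Sigma_fun P x = \<psi> x)"
    and "\<And>a. conv_inc (fst P) (snd P) a \<Longrightarrow> \<psi> (sup_seq a) = sup_seq (\<lambda>n. snd P (a n))"
proof -
  have key: "sup_seq a \<in> C \<and> \<psi> (sup_seq a) = sup_seq (\<lambda>n. snd P (a n))"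
    if c: "conv_inc (fst P) (snd P) a" for a
  proof -
    have "conv_inc C \<psi> a" using conv_inc_mono[of "fst P" \<psi> a C] c g conv_inc_good[OF g]
      unfolding good_def by auto
    hence "sup_seq a \<in> C \<and> \<psi> (sup_seq a) = sup_seq (\<lambda>n. \<psi> (a n))"
      using cpl unfolding complete_vs_def Sigma_complete_def by blast
    thus ?thesis using conv_inc_val[OF g c] by simp
  qed
  show "\<And>a. conv_inc (fst P) (snd P) a \<Longrightarrow> \<psi> (sup_seq a) = sup_seq (\<lambda>n. snd P (a n))"
    using key by blast
  show "Sigma_dom P \<subseteq> C \<and> (\<forall>x\<in>Sigma_dom P. Sigma_fun P x = \<psi> x)"
  proof (intro conjI ballI subsetI)
    fix x assume "x \<in> Sigma_dom P"
    then obtain a where a: "conv_inc (fst P) (snd P) a" "x = sup_seq a" unfolding Sigma_dom_def by blast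
    thus "x \<in> C" using key by blast
    show "Sigma_fun P x = \<psi> x" unfolding Sigma_fun_def
      apply (rule someI2_ex)
      using a apply blast
      using key a by metis
  qed
qed

lemma Pi_ext_good: "complete_vs C \<psi> \<Longrightarrow> good C \<psi> P \<Longrightarrow> good C \<psi> (Pi_ext P)"
  using Pi_good(1)[of C \<psi> P] unfolding Pi_ext_def good_def[of C \<psi> "(Pi_dom P, Pi_fun P)"] by simp
lemma Sigma_ext_good: "complete_vs C \<psi> \<Longrightarrow> good C \<psi> P \<Longrightarrow> good C \<psi> (Sigma_ext P)"
  using Sigma_good(1)[of C \<psi> P] unfolding Sigma_ext_def good_def[of C \<psi> "(Sigma_dom P, Sigma_fun P)"] by simp

lemma valuation_subset: "valuation C \<psi> \<Longrightarrow> X \<subseteq> C \<Longrightarrow> valuation X \<psi>"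
  unfolding valuation_def by blast

lemma Pi_extendible_good:
  assumes "valuation_system C \<psi>" "complete_vs C \<psi>" "good C \<psi> P"
  shows "Pi_extendible P"
proof -
  have "valuation (Pi_dom P) \<psi>"
    using valuation_subset[of C \<psi> "Pi_dom P"] Pi_good(1)[OF assms(2,3)] assms(1)
    unfolding valuation_system_def by blast
  thus ?thesis unfolding Pi_extendible_def using Pi_good(2)[OF assms(2,3)] by blast
qed

lemma Sigma_extendible_good:
  assumes "valuation_system C \<psi>" "complete_vs C \<psi>" "good C \<psi> P"
  shows "Sigma_extendible P"
proof -
  have "valuation (Sigma_dom P) \<psi>"
    using valuation_subset[of C \<psi> "Sigma_dom P"] Sigma_good(1)[OF assms(2,3)] assms(1)
    unfolding valuation_system_def by blast
  thus ?thesis unfolding Sigma_extendible_def using Sigma_good(2)[OF assms(2,3)] by blast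
qed

lemma pm_eq_good: "pm_eq P Q \<Longrightarrow> good C \<psi> Q \<Longrightarrow> good C \<psi> P"
  unfolding pm_eq_def good_def by auto

lemma Pi_dom_sub: "X \<subseteq> Pi_dom (X, f)"
proof
  fix x assume "x \<in> X"
  hence "conv_dec (fst (X,f)) (snd (X,f)) (\<lambda>n. x) \<and> inf_seq (\<lambda>n. x) = x"
    using conv_dec_const by simp
  thus "x \<in> Pi_dom (X, f)" unfolding Pi_dom_def by (metis (mono_tags, lifting) mem_Collect_eq)
qed
lemma Sigma_dom_sub: "X \<subseteq> Sigma_dom (X, f)"
proof
  fix x assume "x \<in> X"
  hence "conv_inc (fst (X,f)) (snd (X,f)) (\<lambda>n. x) \<and> sup_seq (\<lambda>n. x) = x"
    using conv_inc_const by simp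
  thus "x \<in> Sigma_dom (X, f)" unfolding Sigma_dom_def by (metis (mono_tags, lifting) mem_Collect_eq)
qed
lemma Pi_dom_mono: "X \<subseteq> Y \<Longrightarrow> Pi_dom (X, f) \<subseteq> Pi_dom (Y, f)"
  unfolding Pi_dom_def using conv_dec_mono[of X f _ Y] by auto
lemma Sigma_dom_mono: "X \<subseteq> Y \<Longrightarrow> Sigma_dom (X, f) \<subseteq> Sigma_dom (Y, f)"
  unfolding Sigma_dom_def using conv_inc_mono[of X f _ Y] by auto



lemma wo_facts:
  assumes "Well_order r"
  shows "refl_on (Field r) r" "trans r" "antisym r" "total_on (Field r) r" "wf (r - Id)"
  using assms unfolding well_order_on_def linear_order_on_def partial_order_on_def preorder_on_def by auto

lemma succ_unique:
  assumes wo: "Well_order r" and s1: "wo_succ_of r \<gamma> \<beta>" and s2: "wo_succ_of r \<gamma>' \<beta>"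
  shows "\<gamma> = \<gamma>'"
proof (rule ccontr)
  assume ne: "\<gamma> \<noteq> \<gamma>'"
  have f: "\<gamma> \<in> Field r" "\<gamma>' \<in> Field r" using s1 s2 unfolding wo_succ_of_def by (auto intro: FieldI1)
  have "(\<gamma>, \<gamma>') \<in> r \<or> (\<gamma>', \<gamma>) \<in> r" using wo_facts(4)[OF wo] f ne unfolding total_on_def by blast
  thus False using s1 s2 ne unfolding wo_succ_of_def by blast
qed

lemma zero_not_succ:
  assumes wo: "Well_order r" and z: "wo_zero r \<beta>" and s: "wo_succ_of r \<gamma> \<beta>"
  shows False
proof -
  have "\<gamma> \<in> Field r" using s unfolding wo_succ_of_def by (auto intro: FieldI1)
  hence "(\<beta>, \<gamma>) \<in> r" using z unfolding wo_zero_def by blast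
  moreover have "(\<gamma>, \<beta>) \<in> r" "\<gamma> \<noteq> \<beta>" using s unfolding wo_succ_of_def by auto
  ultimately show False using wo_facts(3)[OF wo] unfolding antisym_def by blast
qed

lemma hier_good:
  assumes wo: "Well_order r" and h: "hierarchy r L \<phi> H \<theta>"
    and ext: "extends C \<psi> L \<phi>" and cpl: "complete_vs C \<psi>"
  shows "(\<beta>, \<theta>) \<in> r \<Longrightarrow> good C \<psi> (H \<beta> k)"
proof (induction \<beta> arbitrary: k rule: wf_induct[OF wo_facts(5)[OF wo]])
  case (1 \<beta>)
  have tr: "trans r" using wo_facts(2)[OF wo] .
  note hb = h[unfolded hierarchy_def, THEN spec[where x=\<beta>], THEN mp, OF "1.prems"]
  have gL: "good C \<psi> (L, \<phi>)" using ext unfolding extends_def good_def by auto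
  have IH: "\<And>\<gamma> k. (\<gamma>, \<beta>) \<in> r \<Longrightarrow> \<gamma> \<noteq> \<beta> \<Longrightarrow> good C \<psi> (H \<gamma> k)"
  proof -
    fix \<gamma> k assume a: "(\<gamma>, \<beta>) \<in> r" "\<gamma> \<noteq> \<beta>"
    have "(\<gamma>, \<theta>) \<in> r" using tr a(1) "1.prems" unfolding trans_def by blast
    moreover have "(\<gamma>, \<beta>) \<in> r - Id" using a by simp
    ultimately show "good C \<psi> (H \<gamma> k)" using "1.IH" by blast
  qed
  have fb: "\<beta> \<in> Field r" using "1.prems" by (auto intro: FieldI1)
  show ?case
  proof (cases "wo_zero r \<beta>")
    case True
    have "pm_eq (H \<beta> True) (L, \<phi>) \<and> pm_eq (H \<beta> False) (L, \<phi>)" using True hb by simp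
    hence "good C \<psi> (H \<beta> True)" "good C \<psi> (H \<beta> False)" using gL pm_eq_good by blast+
    thus ?thesis by (cases k) simp_all
  next
    case nz: False
    show ?thesis
    proof (cases "\<exists>\<gamma>. wo_succ_of r \<gamma> \<beta>")
      case True
      then obtain \<gamma> where s: "wo_succ_of r \<gamma> \<beta>" by blast
      have "(\<gamma>, \<beta>) \<in> r" "\<gamma> \<noteq> \<beta>" using s unfolding wo_succ_of_def by auto
      hence g: "good C \<psi> (H \<gamma> kk)" for kk using IH by blast
      have "pm_eq (H \<beta> True) (Pi_ext (H \<gamma> False)) \<and> pm_eq (H \<beta> False) (Sigma_ext (H \<gamma> True))"
        using hb s by blast
      hence "good C \<psi> (H \<beta> True)" "good C \<psi> (H \<beta> False)"
        using pm_eq_good Pi_ext_good[OF cpl g] Sigma_ext_good[OF cpl g] by blast+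
      thus ?thesis by (cases k) simp_all
    next
      case False
      hence lim: "wo_limit r \<beta>" using nz fb unfolding wo_limit_def by blast
      hence hl: "fst (H \<beta> k) = (\<Union>\<gamma>\<in>{\<gamma>. (\<gamma>, \<beta>) \<in> r \<and> \<gamma> \<noteq> \<beta>}. fst (H \<gamma> k))"
        "\<And>\<gamma>. (\<gamma>, \<beta>) \<in> r \<Longrightarrow> \<gamma> \<noteq> \<beta> \<Longrightarrow> (\<forall>x\<in>fst (H \<gamma> k). snd (H \<beta> k) x = snd (H \<gamma> k) x)"
        using hb by auto
      show ?thesis unfolding good_def
      proof (intro conjI ballI subsetI)
        fix x assume "x \<in> fst (H \<beta> k)"
        then obtain \<gamma> where g: "(\<gamma>, \<beta>) \<in> r" "\<gamma> \<noteq> \<beta>" "x \<in> fst (H \<gamma> k)" using hl(1) by blast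
        have gg: "good C \<psi> (H \<gamma> k)" using IH g by blast
        show "x \<in> C" using gg g unfolding good_def by blast
        show "snd (H \<beta> k) x = \<psi> x" using gg g hl(2)[OF g(1,2)] unfolding good_def by auto
      qed
    qed
  qed
qed

lemma phibar_good:
  fixes L :: "'a::lattice set"
  assumes "collapsed_at L \<phi> Q" "extends C \<psi> L \<phi>" "complete_vs C \<psi>"
  shows "good C \<psi> Q"
proof -
  obtain r :: "('a set set \<times> 'a set set) set" and \<alpha> \<beta> H k where
    o: "Well_order r" "wo_succ_of r \<alpha> \<beta>" "hierarchy r L \<phi> H \<beta>" "Q = H \<alpha> k"
    using assms(1) unfolding collapsed_at_def by (elim exE conjE) blast
  have "(\<alpha>, \<beta>) \<in> r" using o(2) unfolding wo_succ_of_def by simp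
  thus ?thesis using hier_good[OF o(1) o(3) assms(2,3)] o(4) by simp
qed



definition stepF :: "('i \<times> 'i) set \<Rightarrow> 'a::lattice set \<Rightarrow> ('a \<Rightarrow> 'e::ordered_ab_group_add)
    \<Rightarrow> ('i \<Rightarrow> bool \<Rightarrow> 'a set) \<Rightarrow> 'i \<Rightarrow> bool \<Rightarrow> 'a set" where
  "stepF r L \<psi> f \<beta> = (if wo_zero r \<beta> then (\<lambda>k. L)
     else if (\<exists>\<gamma>. wo_succ_of r \<gamma> \<beta>) then
       (\<lambda>k. if k then Pi_dom (f (SOME \<gamma>. wo_succ_of r \<gamma> \<beta>) False, \<psi>)
            else Sigma_dom (f (SOME \<gamma>. wo_succ_of r \<gamma> \<beta>) True, \<psi>))
     else (\<lambda>k. \<Union>\<gamma>\<in>{\<gamma>. (\<gamma>, \<beta>) \<in> r - Id}. f \<gamma> k))"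

definition Dst :: "('i \<times> 'i) set \<Rightarrow> 'a::lattice set \<Rightarrow> ('a \<Rightarrow> 'e::ordered_ab_group_add)
    \<Rightarrow> 'i \<Rightarrow> bool \<Rightarrow> 'a set" where
  "Dst r L \<psi> = wfrec (r - Id) (stepF r L \<psi>)"

lemma Dst_eq: "Well_order r \<Longrightarrow> Dst r L \<psi> \<beta> = stepF r L \<psi> (cut (Dst r L \<psi>) (r - Id) \<beta>) \<beta>"
  unfolding Dst_def using wfrec[OF wo_facts(5)] by metis

lemma Dst_zero: "Well_order r \<Longrightarrow> wo_zero r \<beta> \<Longrightarrow> Dst r L \<psi> \<beta> k = L"
  by (subst Dst_eq) (auto simp: stepF_def)

lemma Dst_succ:
  assumes wo: "Well_order r" and s: "wo_succ_of r \<gamma> \<beta>"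
  shows "Dst r L \<psi> \<beta> True = Pi_dom (Dst r L \<psi> \<gamma> False, \<psi>)"
    and "Dst r L \<psi> \<beta> False = Sigma_dom (Dst r L \<psi> \<gamma> True, \<psi>)"
proof -
  have nz: "\<not> wo_zero r \<beta>" using zero_not_succ[OF wo _ s] by blast
  have sm: "(SOME \<gamma>. wo_succ_of r \<gamma> \<beta>) = \<gamma>" using succ_unique[OF wo _ s] s by (metis someI)
  have inr: "(\<gamma>, \<beta>) \<in> r - Id" using s unfolding wo_succ_of_def by simp
  show "Dst r L \<psi> \<beta> True = Pi_dom (Dst r L \<psi> \<gamma> False, \<psi>)"
    by (subst Dst_eq[OF wo]) (simp add: stepF_def nz sm s cut_apply[OF inr] exI[of _ \<gamma>])
  show "Dst r L \<psi> \<beta> False = Sigma_dom (Dst r L \<psi> \<gamma> True, \<psi>)"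
    by (subst Dst_eq[OF wo]) (simp add: stepF_def nz sm s cut_apply[OF inr] exI[of _ \<gamma>])
qed

lemma Dst_lim:
  assumes wo: "Well_order r" and nz: "\<not> wo_zero r \<beta>" and ns: "\<not> (\<exists>\<gamma>. wo_succ_of r \<gamma> \<beta>)"
  shows "Dst r L \<psi> \<beta> k = (\<Union>\<gamma>\<in>{\<gamma>. (\<gamma>, \<beta>) \<in> r - Id}. Dst r L \<psi> \<gamma> k)"
proof -
  have "Dst r L \<psi> \<beta> k = (\<Union>\<gamma>\<in>{\<gamma>. (\<gamma>, \<beta>) \<in> r - Id}. cut (Dst r L \<psi>) (r - Id) \<beta> \<gamma> k)"
    by (subst Dst_eq[OF wo]) (simp add: stepF_def nz ns)
  also have "\<dots> = (\<Union>\<gamma>\<in>{\<gamma>. (\<gamma>, \<beta>) \<in> r - Id}. Dst r L \<psi> \<gamma> k)"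
    by (rule SUP_cong) (auto simp: cut_apply)
  finally show ?thesis .
qed



locale constr =
  fixes r :: "('i \<times> 'i) set" and L C :: "'a::lattice set" and \<phi> \<psi> :: "'a \<Rightarrow> 'e::ordered_ab_group_add"
  assumes wo: "Well_order r" and fld: "Field r = UNIV"
    and vs: "valuation_system C \<psi>" and ext: "extends C \<psi> L \<phi>" and cpl: "complete_vs C \<psi>"
begin

abbreviation "D \<equiv> Dst r L \<psi>"

lemma refl_r: "(x, x) \<in> r"
  using wo_facts(1)[OF wo] fld unfolding refl_on_def by auto
lemma total_r: "x \<noteq> y \<Longrightarrow> (x, y) \<in> r \<or> (y, x) \<in> r"
  using wo_facts(4)[OF wo] fld unfolding total_on_def by auto
lemma antisym_r: "(x, y) \<in> r \<Longrightarrow> (y, x) \<in> r \<Longrightarrow> x = y"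
  using wo_facts(3)[OF wo] unfolding antisym_def by auto
lemma trans_r: "(x, y) \<in> r \<Longrightarrow> (y, z) \<in> r \<Longrightarrow> (x, z) \<in> r"
  using wo_facts(2)[OF wo] unfolding trans_def by blast

lemma good_set: "X \<subseteq> C \<Longrightarrow> good C \<psi> (X, \<psi>)"
  unfolding good_def by simp

lemma D_good: "D \<beta> k \<subseteq> C"
proof (induction \<beta> arbitrary: k rule: wf_induct[OF wo_facts(5)[OF wo]])
  case (1 \<beta>)
  show ?case
  proof (cases "wo_zero r \<beta>")
    case True
    thus ?thesis using Dst_zero[OF wo True, of L \<psi>] ext unfolding extends_def by simp
  next
    case nz: False
    show ?thesis
    proof (cases "\<exists>\<gamma>. wo_succ_of r \<gamma> \<beta>")
      case True
      then obtain \<gamma> where s: "wo_succ_of r \<gamma> \<beta>" by blast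
      have "(\<gamma>, \<beta>) \<in> r - Id" using s unfolding wo_succ_of_def by simp
      hence "\<forall>kk. D \<gamma> kk \<subseteq> C" using "1.IH" by (rule_tac mp[OF spec[OF "1.IH"]])
      hence g: "good C \<psi> (D \<gamma> kk, \<psi>)" for kk using good_set by blast
      have "D \<beta> True \<subseteq> C" using Dst_succ(1)[OF wo s, of L \<psi>] Pi_good(1)[OF cpl g[of False]] by simp
      moreover have "D \<beta> False \<subseteq> C" using Dst_succ(2)[OF wo s, of L \<psi>] Sigma_good(1)[OF cpl g[of True]] by simp
      ultimately show ?thesis by (cases k) simp_all
    next
      case False
      have "\<forall>\<gamma>\<in>{\<gamma>. (\<gamma>, \<beta>) \<in> r - Id}. D \<gamma> k \<subseteq> C" using "1.IH" by simp
      thus ?thesis unfolding Dst_lim[OF wo nz False, of L \<psi>] by (intro UN_least) blast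
    qed
  qed
qed

lemma D_hier: "hierarchy r L \<phi> (\<lambda>\<beta> k. (D \<beta> k, \<psi>)) \<theta>"
  unfolding hierarchy_def
proof (intro allI impI conjI)
  fix \<beta> assume z: "wo_zero r \<beta>"
  show "pm_eq (D \<beta> True, \<psi>) (L, \<phi>)" "pm_eq (D \<beta> False, \<psi>) (L, \<phi>)"
    using Dst_zero[OF wo z, of L \<psi>] ext unfolding pm_eq_def extends_def by auto
next
  fix \<beta> \<gamma> assume s: "wo_succ_of r \<gamma> \<beta>"
  have g: "good C \<psi> (D \<gamma> kk, \<psi>)" for kk using good_set D_good by blast
  show "Pi_extendible (D \<gamma> False, \<psi>)" using Pi_extendible_good[OF vs cpl g] .
  show "Sigma_extendible (D \<gamma> True, \<psi>)" using Sigma_extendible_good[OF vs cpl g] .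
  show "pm_eq (D \<beta> True, \<psi>) (Pi_ext (D \<gamma> False, \<psi>))"
    using Dst_succ[OF wo s, of L \<psi>] Pi_good(1)[OF cpl g] unfolding pm_eq_def Pi_ext_def by auto
  show "pm_eq (D \<beta> False, \<psi>) (Sigma_ext (D \<gamma> True, \<psi>))"
    using Dst_succ[OF wo s, of L \<psi>] Sigma_good(1)[OF cpl g] unfolding pm_eq_def Sigma_ext_def by auto
next
  fix \<beta> k assume l: "wo_limit r \<beta>"
  hence nz: "\<not> wo_zero r \<beta>" and ns: "\<not> (\<exists>\<gamma>. wo_succ_of r \<gamma> \<beta>)" unfolding wo_limit_def by auto
  show "fst (D \<beta> k, \<psi>) = (\<Union>\<gamma>\<in>{\<gamma>. (\<gamma>, \<beta>) \<in> r \<and> \<gamma> \<noteq> \<beta>}. fst (D \<gamma> k, \<psi>))"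
    using Dst_lim[OF wo nz ns, of L \<psi>] by simp
next
  fix \<beta> k \<gamma> assume "wo_limit r \<beta>" "(\<gamma>, \<beta>) \<in> r \<and> \<gamma> \<noteq> \<beta>"
  show "\<forall>x\<in>fst (D \<gamma> k, \<psi>). snd (D \<beta> k, \<psi>) x = snd (D \<gamma> k, \<psi>) x" by simp
qed

lemma D_mono_inv:
  "D \<gamma> True \<subseteq> Pi_dom (D \<gamma> False, \<psi>) \<and> D \<gamma> False \<subseteq> Sigma_dom (D \<gamma> True, \<psi>) \<and>
   (\<forall>\<beta> k. (\<beta>, \<gamma>) \<in> r \<longrightarrow> D \<beta> k \<subseteq> D \<gamma> k)"
proof (induction \<gamma> rule: wf_induct[OF wo_facts(5)[OF wo]])
  case (1 \<gamma>)
  show ?case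
  proof (cases "wo_zero r \<gamma>")
    case True
    have "\<And>\<beta>. (\<beta>, \<gamma>) \<in> r \<Longrightarrow> \<beta> = \<gamma>" using True antisym_r fld unfolding wo_zero_def by blast
    thus ?thesis using Dst_zero[OF wo True, of L \<psi>] Pi_dom_sub[of L \<psi>] Sigma_dom_sub[of L \<psi>] by auto
  next
    case nz: False
    show ?thesis
    proof (cases "\<exists>\<delta>. wo_succ_of r \<delta> \<gamma>")
      case True
      then obtain \<delta> where s: "wo_succ_of r \<delta> \<gamma>" by blast
      have "(\<delta>, \<gamma>) \<in> r - Id" using s unfolding wo_succ_of_def by simp
      hence IH: "D \<delta> True \<subseteq> Pi_dom (D \<delta> False, \<psi>)" "D \<delta> False \<subseteq> Sigma_dom (D \<delta> True, \<psi>)"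
        "\<And>\<beta> k. (\<beta>, \<delta>) \<in> r \<Longrightarrow> D \<beta> k \<subseteq> D \<delta> k" using "1.IH" by blast+
      have e: "D \<gamma> True = Pi_dom (D \<delta> False, \<psi>)" "D \<gamma> False = Sigma_dom (D \<delta> True, \<psi>)"
        using Dst_succ[OF wo s, of L \<psi>] by auto
      have st: "D \<delta> k \<subseteq> D \<gamma> k" for k using IH(1,2) e by (cases k) auto
      have m: "\<forall>\<beta> k. (\<beta>, \<gamma>) \<in> r \<longrightarrow> D \<beta> k \<subseteq> D \<gamma> k"
      proof (intro allI impI)
        fix \<beta> k assume b: "(\<beta>, \<gamma>) \<in> r"
        show "D \<beta> k \<subseteq> D \<gamma> k"
        proof (cases "\<beta> = \<gamma>")
          case False
          have "(\<beta>, \<delta>) \<in> r"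
          proof (cases "\<beta> = \<delta>")
            case True thus ?thesis using refl_r by simp
          next
            case False
            thus ?thesis using total_r[OF False] s b \<open>\<beta> \<noteq> \<gamma>\<close> unfolding wo_succ_of_def by blast
          qed
          thus ?thesis using IH(3) st by blast
        qed simp
      qed
      have "D \<gamma> True \<subseteq> Pi_dom (D \<gamma> False, \<psi>)" using e(1) st Pi_dom_mono by blast
      moreover have "D \<gamma> False \<subseteq> Sigma_dom (D \<gamma> True, \<psi>)" using e(2) st Sigma_dom_mono by blast
      ultimately show ?thesis using m by blast
    next
      case ns: False
      have el: "D \<gamma> k = (\<Union>\<beta>\<in>{\<beta>. (\<beta>, \<gamma>) \<in> r - Id}. D \<beta> k)" for k using Dst_lim[OF wo nz ns, of L \<psi>] .
      have m: "\<forall>\<beta> k. (\<beta>, \<gamma>) \<in> r \<longrightarrow> D \<beta> k \<subseteq> D \<gamma> k"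
      proof (intro allI impI)
        fix \<beta> k assume b: "(\<beta>, \<gamma>) \<in> r"
        show "D \<beta> k \<subseteq> D \<gamma> k"
        proof (cases "\<beta> = \<gamma>")
          case False
          thus ?thesis using b el[of k] by auto
        qed simp
      qed
      have "D \<gamma> True \<subseteq> Pi_dom (D \<gamma> False, \<psi>)"
      proof
        fix x assume "x \<in> D \<gamma> True"
        then obtain \<beta> where b: "(\<beta>, \<gamma>) \<in> r - Id" "x \<in> D \<beta> True" using el[of True] by auto
        have "D \<beta> True \<subseteq> Pi_dom (D \<beta> False, \<psi>)" using "1.IH" b(1) by blast
        also have "\<dots> \<subseteq> Pi_dom (D \<gamma> False, \<psi>)" using Pi_dom_mono m b(1) by blast
        finally show "x \<in> Pi_dom (D \<gamma> False, \<psi>)" using b(2) by blast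
      qed
      moreover have "D \<gamma> False \<subseteq> Sigma_dom (D \<gamma> True, \<psi>)"
      proof
        fix x assume "x \<in> D \<gamma> False"
        then obtain \<beta> where b: "(\<beta>, \<gamma>) \<in> r - Id" "x \<in> D \<beta> False" using el[of False] by auto
        have "D \<beta> False \<subseteq> Sigma_dom (D \<beta> True, \<psi>)" using "1.IH" b(1) by blast
        also have "\<dots> \<subseteq> Sigma_dom (D \<gamma> True, \<psi>)" using Sigma_dom_mono m b(1) by blast
        finally show "x \<in> Sigma_dom (D \<gamma> True, \<psi>)" using b(2) by blast
      qed
      ultimately show ?thesis using m by blast
    qed
  qed
qed

lemma D_mono: "(\<beta>, \<gamma>) \<in> r \<Longrightarrow> D \<beta> k \<subseteq> D \<gamma> k"
  using D_mono_inv by blast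

end


lemma no_inj_small:
  fixes g :: "'a set set \<Rightarrow> 'a \<times> bool"
  shows "\<not> inj_on g (UNIV - {m})"
proof
  assume inj: "inj_on g (UNIV - {m})"
  show False
  proof (cases "finite (UNIV :: 'a set)")
    case True
    define n where "n = card (UNIV :: 'a set)"
    have n1: "n \<ge> 1" using True unfolding n_def by (simp add: Suc_leI finite_UNIV_card_ge_0)
    have fs: "finite (UNIV :: 'a set set set)" using True by (simp add: Finite_Set.finite_set)
    have c1: "card (UNIV :: 'a set set set) = 2 ^ 2 ^ n"
    proof -
      have "card (Pow (Pow (UNIV::'a set))) = 2 ^ 2 ^ n"
        using card_Pow[OF True] card_Pow[of "Pow (UNIV::'a set)"] True unfolding n_def
        by (simp only: finite_Pow_iff)
      moreover have "Pow (Pow (UNIV::'a set)) = UNIV" by simp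
      ultimately show ?thesis by metis
    qed
    have fp: "finite (UNIV :: ('a \<times> bool) set)" using True by (simp add: finite_prod)
    have c2: "card (UNIV :: ('a \<times> bool) set) = 2 * n"
      unfolding n_def by (simp add: card_cartesian_product UNIV_Times_UNIV[symmetric] del: UNIV_Times_UNIV)
    have a1: "card (UNIV - {m}) \<le> 2 * n"
      using card_inj_on_le[OF inj _ fp] c2 by simp
    have a2: "card (UNIV - {m}) = 2 ^ 2 ^ n - 1" using c1 fs by (simp add: card_Diff_singleton)
    have "2 ^ n \<ge> n + 1" by (induct n) auto
    hence a3: "(2::nat) ^ 2 ^ n \<ge> 2 ^ (n+1)" by (rule power_increasing) simp
    have a4: "(2::nat) ^ (n + 1) \<ge> 2 * (n + 1)" using \<open>2 ^ n \<ge> n + 1\<close> by simp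
    have a5: "(2::nat) ^ 2 ^ n \<ge> 2 * n + 2" using le_trans[OF a4 a3] by simp
    show False using a1 a2 a5 by linarith
  next
    case False
    define f :: "'a set \<Rightarrow> 'a set set" where "f A = (if {A} = m then {} else {A})" for A
    have "inj_on f UNIV" unfolding f_def inj_on_def by auto
    moreover have "f ` UNIV \<subseteq> UNIV - {m}" unfolding f_def by auto
    ultimately have "|UNIV :: 'a set set| \<le>o |UNIV - {m}|" using card_of_ordLeq by blast
    moreover have "|UNIV - {m}| \<le>o |UNIV :: ('a \<times> bool) set|" using inj card_of_ordLeq by blast
    moreover have "|UNIV :: ('a \<times> bool) set| =o |UNIV :: 'a set|"
    proof -
      obtain a b :: 'a where ab: "a \<noteq> b"
        using False by (metis (full_types) UNIV_eq_I finite.emptyI finite_insert insertCI)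
      have "inj_on (\<lambda>x. if x then a else b) (UNIV :: bool set)" using ab unfolding inj_on_def by auto
      hence "|UNIV :: bool set| \<le>o |UNIV :: 'a set|" using card_of_ordLeq by blast
      thus ?thesis using card_of_Times_infinite[OF False, of "UNIV :: bool set"]
        by (simp add: UNIV_Times_UNIV[symmetric] del: UNIV_Times_UNIV)
    qed
    moreover have "|UNIV :: 'a set| <o |UNIV :: 'a set set|"
      using card_of_Pow[of "UNIV :: 'a set"] by simp
    ultimately show False
      by (meson not_ordLess_ordLeq ordLeq_transitive ordIso_iff_ordLeq)
  qed
qed

theorem proposition5p36:
  fixes L C :: "'a::lattice set"
    and \<phi> \<psi> :: "'a \<Rightarrow> 'e::ordered_ab_group_add"
  assumes "valuation_system L \<phi>"
    and "valuation_system C \<psi>"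
    and "extends C \<psi> L \<phi>"
    and "complete_vs C \<psi>"
  shows "extendible L \<phi> \<and> extends C \<psi> (fst (phibar L \<phi>)) (snd (phibar L \<phi>))"
proof -
  note vs = assms(2) and ext = assms(3) and cpl = assms(4)
  obtain r :: "('a set set \<times> 'a set set) set" where wr: "well_order_on UNIV r"
    using well_order_on by blast
  have fld: "Field r = UNIV" using well_order_on_Field[OF wr] by simp
  have wo: "Well_order r" using wr fld by simp
  interpret c: constr r L C \<phi> \<psi>
    by (rule constr.intro[OF wo fld vs ext cpl])
  have ext1: "extendible L \<phi>"
  proof (rule ccontr)
    assume ne: "\<not> extendible L \<phi>"
    have nc: "\<not> (c.D \<alpha> True = c.D \<beta> True \<and> c.D \<alpha> False = c.D \<beta> False)"
      if s: "wo_succ_of r \<alpha> \<beta>" for \<alpha> \<beta>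
    proof
      assume e: "c.D \<alpha> True = c.D \<beta> True \<and> c.D \<alpha> False = c.D \<beta> False"
      define X where "X = c.D \<alpha> True"
      have s1: "c.D \<beta> True = Pi_dom (c.D \<alpha> False, \<psi>)" using Dst_succ(1)[OF wo s, of L \<psi>] .
      have s2: "c.D \<beta> False = Sigma_dom (c.D \<alpha> True, \<psi>)" using Dst_succ(2)[OF wo s, of L \<psi>] .
      have a1: "c.D \<alpha> False \<subseteq> X" using Pi_dom_sub[of "c.D \<alpha> False" \<psi>] s1 e unfolding X_def by simp
      have a2: "X \<subseteq> c.D \<alpha> False" using Sigma_dom_sub[of "c.D \<alpha> True" \<psi>] s2 e unfolding X_def by simp
      have XF: "c.D \<alpha> False = X" using a1 a2 by blast
      have PX: "Pi_dom (X, \<psi>) = X"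
      proof -
        have "Pi_dom (X, \<psi>) = c.D \<beta> True" using s1 XF by metis
        also have "\<dots> = X" using e unfolding X_def by metis
        finally show ?thesis .
      qed
      have SX: "Sigma_dom (X, \<psi>) = X"
      proof -
        have "Sigma_dom (X, \<psi>) = c.D \<beta> False" using s2 unfolding X_def by metis
        also have "\<dots> = X" using e XF by metis
        finally show ?thesis .
      qed
      have g: "good C \<psi> (X, \<psi>)" using c.good_set c.D_good unfolding X_def by blast
      have p1: "pm_eq (Pi_ext (X, \<psi>)) (X, \<psi>)"
        using Pi_good(1)[OF cpl g] PX unfolding pm_eq_def Pi_ext_def by simp
      have p2: "pm_eq (Sigma_ext (X, \<psi>)) (X, \<psi>)"
        using Sigma_good(1)[OF cpl g] SX unfolding pm_eq_def Sigma_ext_def by simp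
      have "collapsed_at L \<phi> (X, \<psi>)" unfolding collapsed_at_def
        apply (rule exI[of _ r], rule exI[of _ \<alpha>], rule exI[of _ \<beta>],
               rule exI[of _ "\<lambda>\<beta> k. (c.D \<beta> k, \<psi>)"], rule exI[of _ True])
        apply (intro conjI)
        using wo s c.D_hier[of \<beta>] p1 p2 Pi_extendible_good[OF vs cpl g]
          Sigma_extendible_good[OF vs cpl g] unfolding X_def by blast+
      thus False using ne unfolding extendible_def by blast
    qed
    define N where "N = {\<alpha>. \<exists>\<beta>. wo_succ_of r \<alpha> \<beta>}"
    define sc where "sc \<alpha> = (SOME \<beta>. wo_succ_of r \<alpha> \<beta>)" for \<alpha>
    have scp: "wo_succ_of r \<alpha> (sc \<alpha>)" if aN: "\<alpha> \<in> N" for \<alpha>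
    proof -
      obtain \<beta> where "wo_succ_of r \<alpha> \<beta>" using aN unfolding N_def by blast
      thus ?thesis unfolding sc_def by (rule someI)
    qed
    have new: "\<exists>p. fst p \<in> c.D (sc \<alpha>) (snd p) \<and> fst p \<notin> c.D \<alpha> (snd p)" if a: "\<alpha> \<in> N" for \<alpha>
    proof -
      have "(\<alpha>, sc \<alpha>) \<in> r" using scp[OF a] unfolding wo_succ_of_def by simp
      hence m: "c.D \<alpha> k \<subseteq> c.D (sc \<alpha>) k" for k using c.D_mono by blast
      have "\<exists>k. c.D \<alpha> k \<noteq> c.D (sc \<alpha>) k" using nc[OF scp[OF a]] by blast
      then obtain k where "c.D \<alpha> k \<noteq> c.D (sc \<alpha>) k" by blast
      then obtain x where "x \<in> c.D (sc \<alpha>) k" "x \<notin> c.D \<alpha> k" using m[of k] by blast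
      thus ?thesis by (intro exI[of _ "(x, k)"]) simp
    qed
    define g where "g \<alpha> = (SOME p. fst p \<in> c.D (sc \<alpha>) (snd p) \<and> fst p \<notin> c.D \<alpha> (snd p))" for \<alpha>
    have gp: "fst (g \<alpha>) \<in> c.D (sc \<alpha>) (snd (g \<alpha>)) \<and> fst (g \<alpha>) \<notin> c.D \<alpha> (snd (g \<alpha>))"
      if "\<alpha> \<in> N" for \<alpha>
      using someI_ex[OF new[OF that]] unfolding g_def .
    have neq: "g a \<noteq> g b" if ab: "a \<in> N" "b \<in> N" "(a, b) \<in> r" "a \<noteq> b" for a b
    proof -
      have "(sc a, b) \<in> r"
      proof (cases "b = sc a")
        case True thus ?thesis using c.refl_r by simp
      next
        case False
        show ?thesis
        proof (rule ccontr)
          assume "(sc a, b) \<notin> r"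
          hence "(b, sc a) \<in> r" using c.total_r[OF False] by blast
          thus False using scp[OF ab(1)] ab(3,4) False unfolding wo_succ_of_def by blast
        qed
      qed
      hence sub: "c.D (sc a) k \<subseteq> c.D b k" for k using c.D_mono by blast
      show ?thesis
      proof
        assume eq: "g a = g b"
        have "fst (g a) \<in> c.D b (snd (g a))" using gp[OF ab(1)] sub by blast
        moreover have "fst (g a) \<notin> c.D b (snd (g a))" using gp[OF ab(2)] eq by simp
        ultimately show False by blast
      qed
    qed
    have inj: "inj_on g N"
    proof (rule inj_onI)
      fix a b assume ab: "a \<in> N" "b \<in> N" "g a = g b"
      show "a = b"
      proof (rule ccontr)
        assume "a \<noteq> b"
        hence "(a, b) \<in> r \<or> (b, a) \<in> r" using c.total_r by blast
        thus False
        proof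
          assume "(a, b) \<in> r" thus False using neq[of a b] ab \<open>a \<noteq> b\<close> by blast
        next
          assume "(b, a) \<in> r" thus False using neq[of b a] ab \<open>a \<noteq> b\<close> by simp
        qed
      qed
    qed
    have top: "(\<alpha>', \<alpha>) \<in> r" if na: "\<alpha> \<notin> N" for \<alpha> \<alpha>'
    proof (rule ccontr)
      assume nr: "(\<alpha>', \<alpha>) \<notin> r"
      hence "\<alpha>' \<noteq> \<alpha>" using c.refl_r by blast
      hence "(\<alpha>, \<alpha>') \<in> r" using nr c.total_r by blast
      define A where "A = {x. (\<alpha>, x) \<in> r \<and> x \<noteq> \<alpha>}"
      have "\<alpha>' \<in> A" unfolding A_def using \<open>(\<alpha>, \<alpha>') \<in> r\<close> \<open>\<alpha>' \<noteq> \<alpha>\<close> by simp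
      then obtain b where b: "b \<in> A" "\<And>y. (y, b) \<in> r - Id \<Longrightarrow> y \<notin> A"
        using wfE_min[OF wo_facts(5)[OF wo] \<open>\<alpha>' \<in> A\<close>] by blast
      have bA: "(\<alpha>, b) \<in> r" "b \<noteq> \<alpha>" using b(1) unfolding A_def by auto
      have "\<delta> = \<alpha> \<or> \<delta> = b" if "(\<alpha>, \<delta>) \<in> r" "(\<delta>, b) \<in> r" for \<delta>
      proof (rule ccontr)
        assume "\<not> (\<delta> = \<alpha> \<or> \<delta> = b)"
        hence "\<delta> \<in> A" "(\<delta>, b) \<in> r - Id" using that unfolding A_def by auto
        thus False using b(2) by blast
      qed
      hence "wo_succ_of r \<alpha> b" unfolding wo_succ_of_def using bA by blast
      thus False using na unfolding N_def by blast
    qed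
    obtain m where m: "UNIV - {m} \<subseteq> N"
    proof (cases "\<exists>\<alpha>. \<alpha> \<notin> N")
      case True
      then obtain m where mN: "m \<notin> N" by blast
      have "UNIV - {m} \<subseteq> N"
      proof
        fix x assume "x \<in> UNIV - {m}"
        show "x \<in> N"
        proof (rule ccontr)
          assume "x \<notin> N"
          hence "(m, x) \<in> r" "(x, m) \<in> r" using top mN by blast+
          thus False using c.antisym_r \<open>x \<in> UNIV - {m}\<close> by blast
        qed
      qed
      thus ?thesis using that by blast
    next
      case False
      thus ?thesis using that by blast
    qed
    have "inj_on g (UNIV - {m})" using inj_on_subset[OF inj m] .
    thus False using no_inj_small by blast
  qed
  have cq: "collapsed_at L \<phi> (phibar L \<phi>)"
    using ext1 unfolding extendible_def phibar_def by (metis someI_ex)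
  have "good C \<psi> (phibar L \<phi>)" using phibar_good[OF cq ext cpl] .
  thus ?thesis using ext1 unfolding good_def extends_def by auto
qed

end
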